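(* Let $\mathcal{D}',\mathcal{D}''$ be two inputs of $\mathsf{SGDsub}$ that differ only in the user $Z_{1,1}$ (replaced by $Z'_{1,1}$), both run from the same initial point $x_0$ with the same parameters and with threshold parameter $\varsigma\ge0$ in $\mathsf{RobustEst}$; let $x_1$ and $y_1$ be the respective first iterates. If for some $\rho>0$ the pair $(\mathcal{D}',\mathcal{D}'')$ is $\rho$-aligned, then $\|x_1-y_1\|_\infty\le\eta(4\rho+2\varsigma)$.
   Context: $\mathcal{X}\subset\mathbb{R}^d$ is an $\ell_\infty$-ball, $\Pi_{\mathcal{X}}$ Euclidean projection onto it; $f(\cdot;z)$ are differentiable losses; each user is a set of $m$ data points. Robust statistic: a coordinatewise map $(X_1,\dots,X_B)\mapsto X_{\mathrm{rs}}\in\mathbb{R}^d$ such that (i) for any $\rho\ge0$, if more than $B/2$ of the $X_i$ lie in $B_\infty(X',\rho)$ then $X_{\mathrm{rs}}\in B_\infty(X',\rho)$; (ii) if $\|Y_i-X_i\|_\infty\le\Delta$ for all $i$ then $\|X_{\mathrm{rs}}-Y_{\mathrm{rs}}\|_\infty\le\Delta$; (iii) $(aX_i+b)_{\mathrm{rs}}=aX_{\mathrm{rs}}+b$. $\mathsf{RobustEst}(X_1,\dots,X_B;\varsigma)$: for each coordinate $j$ with $\bar x[j]=\frac1B\sum_iX_i[j]$, output the projection of $\bar x[j]$ onto $[X_{\mathrm{rs}}[j]-\varsigma,X_{\mathrm{rs}}[j]+\varsigma]$ if $|X_{\mathrm{rs}}[j]-\bar x[j]|\ge\varsigma$, else $\bar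 x[j]$. $\mathsf{SGDsub}$ with step size $\eta$: users split into groups $\{Z_{i,t}\}_{t\in[T]}$, $i\in[B]$; at step $t$, $q_t(Z_{i,t})=\frac1m\sum_{z\in Z_{i,t}}\nabla f(x_{t-1};z)$, $g_{t-1}=\mathsf{RobustEst}(q_t(Z_{1,t}),\dots,q_t(Z_{B,t});\varsigma)$, $x_t=\Pi_{\mathcal{X}}(x_{t-1}-\eta g_{t-1})$; write $q'_t$, $y_t$ for the analogous quantities on $\mathcal{D}''$. The pair is $\rho$-aligned if there are points $X',Y'$ with $|\{i\in[B]:q_1(Z_{i,1})\in B_\infty(X',\rho)\}|\ge 2B/3$ and $|\{i\in[B]:q'_1(Z'_{i,1})\in B_\infty(Y',\rho)\}|\ge2B/3$ (where $Z'_{i,1}=Z_{i,1}$ for $i\neq1$).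
   Formalization: The number B of groups is at least 4, the initial point $x_0$ lies in the ball $\mathcal{X}$, and the step size $\eta$ is positive. Apart from conventions, each condition added here is assumed in the paper as well or is needed for the statement above to hold. *)

theory Defs
  imports "HOL-Analysis.Analysis"
begin

definition linf_cball :: "real^'d \<Rightarrow> real \<Rightarrow> (real^'d) set" where
  "linf_cball c r = {y. infnorm (y - c) \<le> r}"

definition robust_statistic :: "nat \<Rightarrow> ((nat \<Rightarrow> real^'d) \<Rightarrow> real^'d) \<Rightarrow> bool" where
  "robust_statistic B rs \<longleftrightarrow>
     (\<exists>r :: (nat \<Rightarrow> real) \<Rightarrow> real. \<forall>X j. rs X $ j = r (\<lambda>i. X i $ j)) \<and>
     (\<forall>X X' \<rho>. \<rho> \<ge> 0 \<longrightarrow> real (card {i\<in>{1..B}. X i \<in> linf_cball X' \<rho>}) > real B / 2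
         \<longrightarrow> rs X \<in> linf_cball X' \<rho>) \<and>
     (\<forall>X Y \<Delta>. (\<forall>i\<in>{1..B}. infnorm (Y i - X i) \<le> \<Delta>) \<longrightarrow> infnorm (rs X - rs Y) \<le> \<Delta>) \<and>
     (\<forall>X (a::real) b. rs (\<lambda>i. a *\<^sub>R X i + b) = a *\<^sub>R rs X + b)"

definition robust_est ::
  "((nat \<Rightarrow> real^'d) \<Rightarrow> real^'d) \<Rightarrow> nat \<Rightarrow> real \<Rightarrow> (nat \<Rightarrow> real^'d) \<Rightarrow> real^'d" where
  "robust_est rs B vs X = (\<chi> j.
     let xbar = (\<Sum>i=1..B. X i $ j) / real B; r = rs X $ j in
     if \<bar>r - xbar\<bar> \<ge> vs then max (r - vs) (min (r + vs) xbar) else xbar)"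

text \<open>q(Z) = (1/m) sum_{z in Z} grad f(x; z); G z x is the gradient of f(.; z) at x.\<close>
definition qgrad :: "('z \<Rightarrow> real^'d \<Rightarrow> real^'d) \<Rightarrow> nat \<Rightarrow> 'z set \<Rightarrow> real^'d \<Rightarrow> real^'d" where
  "qgrad G m Z x = (1 / real m) *\<^sub>R (\<Sum>z\<in>Z. G z x)"

text \<open>Iterates of SGDsub: Z i t is the user (group) i used at step t; Xs the constraint set.\<close>
fun sgdsub :: "((nat \<Rightarrow> real^'d) \<Rightarrow> real^'d) \<Rightarrow> nat \<Rightarrow> real \<Rightarrow> real \<Rightarrow>
    ('z \<Rightarrow> real^'d \<Rightarrow> real^'d) \<Rightarrow> nat \<Rightarrow> (real^'d) set \<Rightarrow> (nat \<Rightarrow> nat \<Rightarrow> 'z set) \<Rightarrow>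
    real^'d \<Rightarrow> nat \<Rightarrow> real^'d" where
  "sgdsub rs B vs \<eta> G m Xs Z x0 0 = x0"
| "sgdsub rs B vs \<eta> G m Xs Z x0 (Suc t) =
     (let x = sgdsub rs B vs \<eta> G m Xs Z x0 t in
      closest_point Xs (x - \<eta> *\<^sub>R robust_est rs B vs (\<lambda>i. qgrad G m (Z i (Suc t)) x)))"

definition rho_aligned :: "('z \<Rightarrow> real^'d \<Rightarrow> real^'d) \<Rightarrow> nat \<Rightarrow> nat \<Rightarrow>
    (nat \<Rightarrow> nat \<Rightarrow> 'z set) \<Rightarrow> (nat \<Rightarrow> nat \<Rightarrow> 'z set) \<Rightarrow> real^'d \<Rightarrow> real \<Rightarrow> bool" where
  "rho_aligned G m B Z Z' x0 \<rho> \<longleftrightarrow>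
     (\<exists>X' Y'.
        real (card {i\<in>{1..B}. qgrad G m (Z i 1) x0 \<in> linf_cball X' \<rho>}) \<ge> 2 * real B / 3 \<and>
        real (card {i\<in>{1..B}. qgrad G m (Z' i 1) x0 \<in> linf_cball Y' \<rho>}) \<ge> 2 * real B / 3)"

end

theory Submission
  imports Defs
begin


lemma infnorm_le_cart: "(\<And>j. \<bar>(x::real^'n)$j\<bar> \<le> e) \<Longrightarrow> infnorm x \<le> e"
  unfolding infnorm_cart by (rule cSup_least) auto

lemma linf_cball_iff: "y \<in> linf_cball c R \<longleftrightarrow> (\<forall>j. \<bar>y$j - c$j\<bar> \<le> R)"
  unfolding linf_cball_def using infnorm_le_cart[of "y - c" R] component_le_infnorm_cart[of "y - c"]
  by (auto intro: order_trans)

lemma linf_cball_box: "linf_cball c R = cbox (c - (\<chi> j. R)) (c + (\<chi> j. R))"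
  by (auto simp: linf_cball_iff mem_box_cart abs_le_iff algebra_simps)

lemma closest_clamp:
  fixes a c :: "real^'n"
  assumes "R \<ge> 0"
  shows "closest_point (linf_cball c R) a = (\<chi> j. max (c$j - R) (min (c$j + R) (a$j)))"
proof -
  let ?x = "(\<chi> j. max (c$j - R) (min (c$j + R) (a$j)))"
  have xin: "?x \<in> linf_cball c R" using assms by (auto simp: linf_cball_iff)
  have "\<forall>z\<in>linf_cball c R. dist a ?x \<le> dist a z"
  proof
    fix z assume "z \<in> linf_cball c R"
    hence zb: "\<And>j. \<bar>z$j - c$j\<bar> \<le> R" by (auto simp: linf_cball_iff)
    show "dist a ?x \<le> dist a z" unfolding dist_vec_def
    proof (rule L2_set_mono)
      fix j
      show "dist (a$j) (?x$j) \<le> dist (a$j) (z$j)" using zb[of j] by (auto simp: dist_real_def abs_le_iff)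
      show "0 \<le> dist (a$j) (?x$j)" by simp
    qed
  qed
  thus ?thesis
    by (intro closest_point_unique[symmetric] xin) (auto simp: linf_cball_box convex_box closed_cbox)
qed


lemma robust_est_close:
  assumes "vs \<ge> 0"
  shows "\<bar>robust_est rs B vs X $ j - rs X $ j\<bar> \<le> vs"
  using assms unfolding robust_est_def Let_def by auto


theorem lemma3p6:
  fixes f :: "real^'d \<Rightarrow> 'z \<Rightarrow> real"
    and G :: "'z \<Rightarrow> real^'d \<Rightarrow> real^'d"
    and rs :: "(nat \<Rightarrow> real^'d) \<Rightarrow> real^'d"
    and Z Z' :: "nat \<Rightarrow> nat \<Rightarrow> 'z set"
    and c x0 :: "real^'d"
    and R \<eta> vs \<rho> :: real
    and B T m :: nat
  assumes grad: "\<And>z x. ((\<lambda>y. f y z) has_derivative (\<lambda>h. G z x \<bullet> h)) (at x)"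
    and R: "R \<ge> 0"
    and x0: "x0 \<in> linf_cball c R"
    and rs: "robust_statistic B rs"
    and B: "B \<ge> 4"
    and T: "T \<ge> 1"
    and m: "m > 0"
    and users: "\<And>i t. i \<in> {1..B} \<Longrightarrow> t \<in> {1..T} \<Longrightarrow> card (Z i t) = m"
    and users': "\<And>i t. i \<in> {1..B} \<Longrightarrow> t \<in> {1..T} \<Longrightarrow> card (Z' i t) = m"
    and differ: "\<And>i t. (i, t) \<noteq> (1, 1) \<Longrightarrow> Z' i t = Z i t"
    and eta: "\<eta> > 0"
    and varsigma: "vs \<ge> 0"
    and rho: "\<rho> > 0"
    and aligned: "rho_aligned G m B Z Z' x0 \<rho>"
  shows "infnorm (sgdsub rs B vs \<eta> G m (linf_cball c R) Z x0 1
                - sgdsub rs B vs \<eta> G m (linf_cball c R) Z' x0 1)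
           \<le> \<eta> * (4 * \<rho> + 2 * vs)"
proof -
  define X where "X = (\<lambda>i. qgrad G m (Z i 1) x0)"
  define Y where "Y = (\<lambda>i. qgrad G m (Z' i 1) x0)"
  obtain X' Y' where
    a1: "real (card {i\<in>{1..B}. X i \<in> linf_cball X' \<rho>}) \<ge> 2 * real B / 3" and
    a2: "real (card {i\<in>{1..B}. Y i \<in> linf_cball Y' \<rho>}) \<ge> 2 * real B / 3"
    using aligned unfolding rho_aligned_def X_def Y_def by blast
  define A where "A = {i\<in>{1..B}. X i \<in> linf_cball X' \<rho>}"
  define Bs where "Bs = {i\<in>{1..B}. Y i \<in> linf_cball Y' \<rho>}"
  have fin: "finite A" "finite Bs" unfolding A_def Bs_def by auto
  have "card (A \<union> Bs) \<le> card {1..B}"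
    by (rule card_mono) (auto simp: A_def Bs_def)
  hence un: "card (A \<union> Bs) \<le> B" by simp
  have "card (A \<union> Bs) + card (A \<inter> Bs) = card A + card Bs"
    using card_Un_Int[OF fin] by simp
  hence "real (card (A \<inter> Bs)) \<ge> real B / 3"
    using a1 a2 un unfolding A_def[symmetric] Bs_def[symmetric] by linarith
  hence c2: "card (A \<inter> Bs) \<ge> 2" using B by linarith
  have "\<exists>i\<in>A \<inter> Bs. i \<noteq> 1"
  proof (rule ccontr)
    assume "\<not> ?thesis"
    hence "A \<inter> Bs \<subseteq> {1}" by auto
    hence "card (A \<inter> Bs) \<le> 1" using card_mono[of "{1}" "A \<inter> Bs"] by simp
    thus False using c2 by simp
  qed
  then obtain i where i: "i \<in> A" "i \<in> Bs" "i \<noteq> 1" by blast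
  have XY: "X i = Y i" using differ[of i 1] i(3) unfolding X_def Y_def by simp
  have "infnorm (X' - Y') \<le> infnorm (X' - X i) + infnorm (Y i - Y')"
    using infnorm_triangle[of "X' - X i" "Y i - Y'"] XY by simp
  also have "\<dots> \<le> 2 * \<rho>"
    using i(1,2) unfolding A_def Bs_def linf_cball_def
    by (simp add: infnorm_sub[of X']) 
  finally have XY': "infnorm (X' - Y') \<le> 2 * \<rho>" .
  have rsp: "\<And>X X' \<rho>. \<rho> \<ge> 0 \<Longrightarrow> real (card {i\<in>{1..B}. X i \<in> linf_cball X' \<rho>}) > real B / 2
         \<Longrightarrow> rs X \<in> linf_cball X' \<rho>" using rs unfolding robust_statistic_def by blast
  have "rs X \<in> linf_cball X' \<rho>" by (rule rsp) (use rho a1 B in auto)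
  hence rX: "infnorm (rs X - X') \<le> \<rho>" by (simp add: linf_cball_def)
  have "rs Y \<in> linf_cball Y' \<rho>" by (rule rsp) (use rho a2 B in auto)
  hence rY: "infnorm (rs Y - Y') \<le> \<rho>" by (simp add: linf_cball_def)
  have "infnorm (rs X - rs Y) \<le> infnorm (rs X - X') + infnorm (X' - Y') + infnorm (Y' - rs Y)"
    using infnorm_triangle[of "rs X - X'" "X' - Y'"] infnorm_triangle[of "rs X - Y'" "Y' - rs Y"]
    by simp
  hence rXY: "infnorm (rs X - rs Y) \<le> 4 * \<rho>" using rX rY XY' infnorm_sub[of Y' "rs Y"] by linarith
  have gj: "\<bar>robust_est rs B vs X $ j - robust_est rs B vs Y $ j\<bar> \<le> 4 * \<rho> + 2 * vs" for j
    using robust_est_close[OF varsigma, of rs B X j] robust_est_close[OF varsigma, of rs B Y j]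
      component_le_infnorm_cart[of "rs X - rs Y" j] rXY by simp
  show ?thesis
  proof (rule infnorm_le_cart)
    fix j
    have "\<bar>\<eta> * (robust_est rs B vs X $ j) - \<eta> * (robust_est rs B vs Y $ j)\<bar> \<le> \<eta> * (4 * \<rho> + 2 * vs)"
      using gj[of j] eta by (simp add: right_diff_distrib[symmetric] abs_mult)
    thus "\<bar>(sgdsub rs B vs \<eta> G m (linf_cball c R) Z x0 1
                - sgdsub rs B vs \<eta> G m (linf_cball c R) Z' x0 1) $ j\<bar> \<le> \<eta> * (4 * \<rho> + 2 * vs)"
      unfolding One_nat_def sgdsub.simps Let_def closest_clamp[OF R] X_def Y_def
      by (auto simp: abs_le_iff)
  qed
qed

end
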